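(* Let $\mathcal{L}$ be a $d$-colex, let $1\le k<d$, and let $C\subset\mathbb{Z}_{d+1}$ be a set of $k+1$ colors. Then the restriction maps $\pi_C^{(0)},\pi_C^{(1)},\pi_C^{(2)}$ form a morphism of chain complexes from $C_{d-k-1}(\mathcal{L})\xrightarrow{\partial_{d-k-1,d}}C_d(\mathcal{L})\xrightarrow{\partial_{d,k-1}}C_{k-1}(\mathcal{L})$ to $C_{k+1}(\mathcal{L}_C)\xrightarrow{\partial^C_{k+1}}C_k(\mathcal{L}_C)\xrightarrow{\partial^C_k}C_{k-1}(\mathcal{L}_C)$, i.e. $\pi^{(0)}_C\circ\partial_{d,k-1}=\partial^C_k\circ\pi^{(1)}_C$ on $C_d(\mathcal{L})$ and $\pi^{(1)}_C\circ\partial_{d-k-1,d}=\partial^C_{k+1}\circ\pi^{(2)}_C$ on $C_{d-k-1}(\mathcal{L})$.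
   Context: Conventions: all complexes are finite. For a simplicial complex $\mathcal{L}$, $\Delta_k(\mathcal{L})$ is its set of $k$-simplices, and for a simplex $\kappa$, $\Delta_l(\kappa)$ is the set of its $l$-dimensional faces. $C_k(\mathcal{L})$ is the $\mathbb{F}_2$-vector space with basis $\Delta_k(\mathcal{L})$; chains are identified with subsets. $\partial_k\kappa=\sum_{\nu\in\Delta_{k-1}(\kappa)}\nu$. For a $j$-simplex $\kappa$ and $n\ge j$, $\mathrm{Star}_n(\kappa)=\{\nu\in\Delta_n(\mathcal{L}):\kappa\in\Delta_j(\nu)\}$; for $n\le d-j-1$, $\mathrm{Link}_n(\kappa)=\{\nu\in\Delta_n(\mathcal{L}):\nu\cap\kappa=\emptyset\text{ and some }d\text{-simplex contains both}\}$, regarded as an $n$-chain. Generalized boundary maps: for $j\ne n$, $\partial_{j,n}:C_j(\mathcal{L})\to C_n(\mathcal{L})$ is linear with $\partial_{j,n}\kappa=\sum_{\nu\in\Delta_n(\kappa)}\nu$ if $j>n$ and $\partial_{j,n}\kappa=\sum_{\nu\in\mathrm{Star}_n(\kappa)}\nu$ if $j<n$. Colexes: a colorable $0$-ball is a point and a $0$-colex is a finite set of points. For $d\ge1$, a colorable $d$-ball $\mathcal{B}_v$ is the set of $d$-simplices $\{v*\delta:\delta\in\Delta_{d-1}(K)\}$ (where $v*\delta$ is the simplex spanned by $v$ and the vertices of $\delta$) for a $(d-1)$-colex $K$ homeomorphic to the $(d-1)$-sphere and a vertex $v\notin K$; its boundary is $\partial\mathcal{B}_v=K$. For $d\ge1$,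 a $d$-colex (without boundary) $\mathcal{L}$ is a homogeneous simplicial $d$-complex which is a finite union of colorable $d$-balls (sharing no $d$-simplex) glued along their boundaries so that every $(d-1)$-simplex lies in the boundary of exactly two distinct balls, and whose vertices are $(d+1)$-colorable: there is $\mathrm{col}:\Delta_0(\mathcal{L})\to\mathbb{Z}_{d+1}=\{0,\dots,d\}$ assigning distinct colors to the endpoints of every edge. Standing structure: for every vertex $v$, the set of $d$-simplices containing $v$ is the colorable $d$-ball centered at $v$. For a simplex or chain $\alpha$, $\mathrm{col}(\alpha)$ is the set of colors of its vertices. Restricted lattice: for $|C|=k+1$, $\mathcal{L}_C$ is the cell $(k+1)$-complex whose $i$-cells ($0\le i\le k$) are the $i$-simplices $\iota$ of $\mathcal{L}$ with $\mathrm{col}(\iota)\subseteq C$, and whose $(k+1)$-cells are symbols $\Xi(\delta)$, one for each $(d-k-1)$-simplex $\delta$ of $\mathcal{L}$ with $\mathrm{col}(\delta)=\mathbb{Z}_{d+1}\setminus C$. $C_i(\mathcal{L}_C)$ is the $\mathbb{F}_2$-space on its $i$-cells; $\partial_i^C=\partial_i$ on $C_i(\mathcal{L}_C)$ for $1\le i\le k$, and $\partial^C_{k+1}\Xi(\delta)=\mathrm{Link}_k(\delta)$. Restriction maps (linear, defined on basis elements): $\pi^{(0)}_C:C_{k-1}(\mathcal{L})\to C_{k-1}(\mathcal{L}_C)$, $\pi^{(0)}_C(\mu)=\mu$ if $\mathrm{col}(\mu)\subset C$ and $0$ otherwise; $\pi^{(1)}_C:C_d(\mathcal{L})\to C_k(\mathcal{L}_C)$,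 $\pi^{(1)}_C(\delta)=\delta|_C$, the unique $k$-face of the $d$-simplex $\delta$ with color set $C$; $\pi^{(2)}_C:C_{d-k-1}(\mathcal{L})\to C_{k+1}(\mathcal{L}_C)$, $\pi^{(2)}_C(\nu)=\Xi(\nu)$ if $\mathrm{col}(\nu)=\mathbb{Z}_{d+1}\setminus C$ and $0$ otherwise. *)

theory Defs
  imports "HOL-Analysis.Analysis"
begin

text \<open>A homogeneous simplicial complex is represented by the set K of its top-dimensional
simplices (facets), each a finite vertex set; its simplices are all nonempty subsets of facets.
Chains over F_2 are identified with (finite) sets of cells; F_2-linear extensions of maps given
on basis elements are computed by mod-2 counting.\<close>

definition simplices :: "'v set set \<Rightarrow> nat \<Rightarrow> 'v set set" where
  "simplices K k = {s. card s = k + 1 \<and> (\<exists>f\<in>K. s \<subseteq> f)}"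

definition faces :: "nat \<Rightarrow> 'v set \<Rightarrow> 'v set set" where
  "faces l s = {t. t \<subseteq> s \<and> card t = l + 1}"

definition vertices :: "'v set set \<Rightarrow> 'v set" where
  "vertices K = \<Union>K"

definition realization :: "'v set set \<Rightarrow> ('v \<Rightarrow> real) topology" where
  "realization K = subtopology (powertop_real UNIV)
     {x. (\<forall>i. 0 \<le> x i) \<and> (\<exists>f\<in>K. (\<forall>i. i \<notin> f \<longrightarrow> x i = 0) \<and> sum x f = 1)}"

definition proper_coloring :: "nat \<Rightarrow> 'v set set \<Rightarrow> ('v \<Rightarrow> nat) \<Rightarrow> bool" where
  "proper_coloring d K col \<longleftrightarrow>
     (\<forall>v\<in>vertices K. col v \<le> d) \<and>
     (\<forall>x y. x \<noteq> y \<and> (\<exists>f\<in>K. {x, y} \<subseteq> f) \<longrightarrow> col x \<noteq> col y)"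

text \<open>For d \<ge> 1 the decomposition into colorable d-balls is a finite set of pairs
(v, K'): the ball is {v * delta | delta \<in> K'} with boundary K', where K' is a (d-1)-colex
homeomorphic to the (d-1)-sphere and v is not a vertex of K'.\<close>
fun colex :: "nat \<Rightarrow> 'v set set \<Rightarrow> bool" where
  "colex 0 K \<longleftrightarrow> finite K \<and> (\<forall>f\<in>K. card f = 1)"
| "colex (Suc n) K \<longleftrightarrow>
     finite K \<and> (\<forall>f\<in>K. card f = n + 2) \<and>
     (\<exists>Bs :: ('v \<times> 'v set set) set.
        finite Bs \<and>
        (\<forall>(v, K')\<in>Bs. colex n K' \<and> realization K' homeomorphic_space nsphere n
                        \<and> v \<notin> vertices K') \<and>
        K = (\<Union>(v, K')\<in>Bs. insert v ` K') \<and>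
        (\<forall>b1\<in>Bs. \<forall>b2\<in>Bs. b1 \<noteq> b2 \<longrightarrow>
           insert (fst b1) ` snd b1 \<inter> insert (fst b2) ` snd b2 = {}) \<and>
        (\<forall>\<sigma>\<in>(\<Union>b\<in>Bs. snd b). card {b\<in>Bs. \<sigma> \<in> snd b} = 2)) \<and>
     (\<exists>col. proper_coloring (Suc n) K col)"

definition colorable_ball_at :: "nat \<Rightarrow> 'v \<Rightarrow> 'v set set \<Rightarrow> bool" where
  "colorable_ball_at d v B \<longleftrightarrow> (\<exists>K'. colex (d - 1) K' \<and>
      realization K' homeomorphic_space nsphere (d - 1) \<and> v \<notin> vertices K' \<and>
      B = insert v ` K')"

definition Star :: "'v set set \<Rightarrow> nat \<Rightarrow> 'v set \<Rightarrow> 'v set set" where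
  "Star K n \<kappa> = {\<nu>\<in>simplices K n. \<kappa> \<subseteq> \<nu>}"

definition Link :: "'v set set \<Rightarrow> nat \<Rightarrow> 'v set \<Rightarrow> 'v set set" where
  "Link K n \<kappa> = {\<nu>\<in>simplices K n. \<nu> \<inter> \<kappa> = {} \<and> (\<exists>f\<in>K. \<nu> \<subseteq> f \<and> \<kappa> \<subseteq> f)}"

definition lin :: "('a \<Rightarrow> 'b set) \<Rightarrow> 'a set \<Rightarrow> 'b set" where
  "lin g c = {y. odd (card {x\<in>c. y \<in> g x})}"

definition gbd :: "'v set set \<Rightarrow> nat \<Rightarrow> nat \<Rightarrow> 'v set \<Rightarrow> 'v set set" where
  "gbd K j n \<kappa> = (if n < j then faces n \<kappa> else if j < n then Star K n \<kappa> else {})"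

text \<open>(k+1)-cells of the restricted lattice: formal symbols Xi(delta).\<close>
datatype 'v xi_cell = Xi "'v set"

definition pi0 :: "('v \<Rightarrow> nat) \<Rightarrow> nat set \<Rightarrow> 'v set \<Rightarrow> 'v set set" where
  "pi0 col C \<mu> = (if col ` \<mu> \<subseteq> C then {\<mu>} else {})"

definition restr :: "('v \<Rightarrow> nat) \<Rightarrow> nat \<Rightarrow> nat set \<Rightarrow> 'v set \<Rightarrow> 'v set" where
  "restr col k C \<delta> = (THE \<mu>. \<mu> \<in> faces k \<delta> \<and> col ` \<mu> = C)"

definition pi1 :: "('v \<Rightarrow> nat) \<Rightarrow> nat \<Rightarrow> nat set \<Rightarrow> 'v set \<Rightarrow> 'v set set" where
  "pi1 col k C \<delta> = {restr col k C \<delta>}"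

definition pi2 :: "('v \<Rightarrow> nat) \<Rightarrow> nat \<Rightarrow> nat set \<Rightarrow> 'v set \<Rightarrow> 'v xi_cell set" where
  "pi2 col d C \<nu> = (if col ` \<nu> = {0..d} - C then {Xi \<nu>} else {})"

definition bdC :: "nat \<Rightarrow> 'v set \<Rightarrow> 'v set set" where
  "bdC i \<iota> = faces (i - 1) \<iota>"

definition bdC_top :: "'v set set \<Rightarrow> nat \<Rightarrow> 'v xi_cell \<Rightarrow> 'v set set" where
  "bdC_top K k x = (case x of Xi \<delta> \<Rightarrow> Link K k \<delta>)"

end

theory Submission imports Defs "HOL-Library.Z2" begin

definition chi :: "'a set \<Rightarrow> 'a \<Rightarrow> bit" where "chi A y = of_bool (y \<in> A)"

lemma of_nat_bit: "(of_nat n :: bit) = of_bool (odd n)"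
  by (induction n) auto

lemma chi_lin: "finite c \<Longrightarrow> chi (lin g c) y = (\<Sum>x\<in>c. chi (g x) y)"
proof -
  assume "finite c"
  have "(\<Sum>x\<in>c. chi (g x) y) = (\<Sum>x\<in>{x\<in>c. y \<in> g x}. 1)"
    unfolding chi_def using \<open>finite c\<close> by (simp add: sum.inter_filter[symmetric] of_bool_def if_distrib)
  also have "\<dots> = of_nat (card {x\<in>c. y \<in> g x})" by simp
  finally show ?thesis by (simp add: chi_def lin_def of_nat_bit)
qed

lemma chi_eq: "(\<And>y. chi A y = chi B y) \<Longrightarrow> A = B"
proof (rule set_eqI)
  fix y assume "\<And>y. chi A y = chi B y"
  then have "(of_bool (y \<in> A) :: bit) = of_bool (y \<in> B)" by (simp add: chi_def)
  then show "y \<in> A \<longleftrightarrow> y \<in> B" by (cases "y \<in> A"; cases "y \<in> B") auto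
qed

lemma lin_comp:
  assumes c: "finite c" and g: "\<And>x. x \<in> c \<Longrightarrow> finite (g x)"
  shows "lin f (lin g c) = lin (\<lambda>x. lin f (g x)) c"
proof (rule chi_eq)
  fix y
  define Z where "Z = \<Union>(g ` c)"
  have Zf: "finite Z" using c g by (auto simp: Z_def)
  have sub: "lin g c \<subseteq> Z"
  proof
    fix z assume "z \<in> lin g c"
    then have o: "odd (card {x\<in>c. z \<in> g x})" by (simp add: lin_def)
    have "{x\<in>c. z \<in> g x} \<noteq> {}"
    proof
      assume e: "{x\<in>c. z \<in> g x} = {}"
      from o show False unfolding e by simp
    qed
    then show "z \<in> Z" by (auto simp: Z_def)
  qed
  have gZ: "x \<in> c \<Longrightarrow> g x \<subseteq> Z" for x by (auto simp: Z_def)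
  have "chi (lin f (lin g c)) y = (\<Sum>z\<in>lin g c. chi (f z) y)"
    by (rule chi_lin[OF finite_subset[OF sub Zf]])
  also have "\<dots> = (\<Sum>z\<in>Z. chi (lin g c) z * chi (f z) y)"
    by (rule sum.mono_neutral_cong_left[OF Zf sub]) (auto simp: chi_def)
  also have "\<dots> = (\<Sum>z\<in>Z. (\<Sum>x\<in>c. chi (g x) z) * chi (f z) y)"
    by (simp only: chi_lin[OF c])
  also have "\<dots> = (\<Sum>x\<in>c. \<Sum>z\<in>Z. chi (g x) z * chi (f z) y)"
    by (simp only: sum_distrib_right) (rule sum.swap)
  also have "\<dots> = (\<Sum>x\<in>c. \<Sum>z\<in>g x. chi (f z) y)"
  proof (rule sum.cong[OF refl])
    fix x assume "x \<in> c"
    show "(\<Sum>z\<in>Z. chi (g x) z * chi (f z) y) = (\<Sum>z\<in>g x. chi (f z) y)"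
      by (rule sum.mono_neutral_cong_left[OF Zf gZ[OF \<open>x \<in> c\<close>], symmetric]) (auto simp: chi_def)
  qed
  also have "\<dots> = (\<Sum>x\<in>c. chi (lin f (g x)) y)"
    by (intro sum.cong refl, rule chi_lin[symmetric], rule g)
  also have "\<dots> = chi (lin (\<lambda>x. lin f (g x)) c) y"
    by (rule chi_lin[OF c, symmetric])
  finally show "chi (lin f (lin g c)) y = chi (lin (\<lambda>x. lin f (g x)) c) y" .
qed



lemma card_colex0_sphere:
  assumes c0: "colex 0 K" and h: "realization K homeomorphic_space nsphere 0"
  shows "card K = 2"
proof -
  define ind where "ind = (\<lambda>f::'a set. \<lambda>i. if i \<in> f then (1::real) else 0)"
  define S where "S = {x::'a\<Rightarrow>real. (\<forall>i. 0 \<le> x i) \<and> (\<exists>f\<in>K. (\<forall>i. i \<notin> f \<longrightarrow> x i = 0) \<and> sum x f = 1)}"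
  have tS: "topspace (realization K) = S" by (simp add: realization_def S_def)
  have sing: "\<And>f. f \<in> K \<Longrightarrow> \<exists>a. f = {a}" using c0 by (simp add: card_1_singleton_iff)
  have SK: "S = ind ` K"
  proof (intro set_eqI iffI)
    fix x assume "x \<in> S"
    then obtain f where f: "f \<in> K" "\<forall>i. i \<notin> f \<longrightarrow> x i = 0" "sum x f = 1" by (auto simp: S_def)
    obtain a where a: "f = {a}" using sing f(1) by blast
    have "x = ind f" using f a by (auto simp: ind_def fun_eq_iff)
    then show "x \<in> ind ` K" using f(1) by blast
  next
    fix x assume "x \<in> ind ` K"
    then obtain f where f: "f \<in> K" "x = ind f" by blast
    obtain a where a: "f = {a}" using sing f(1) by blast
    show "x \<in> S" unfolding S_def using f a by (auto simp: ind_def intro!: bexI[of _ "{a}"])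
  qed
  have inj: "inj_on ind K"
  proof (rule inj_onI)
    fix f g assume "ind f = ind g"
    then have "\<forall>i. (i \<in> f) = (i \<in> g)" by (metis ind_def zero_neq_one)
    then show "f = g" by blast
  qed
  obtain hh where hh: "homeomorphic_map (realization K) (nsphere 0) hh"
    using h homeomorphic_space by blast
  have "bij_betw hh S (topspace (nsphere 0))"
    using homeomorphic_imp_injective_map[OF hh] homeomorphic_imp_surjective_map[OF hh] tS
    by (simp add: bij_betw_def)
  then have "card S = card (topspace (nsphere 0))" by (rule bij_betw_same_card)
  moreover have "card S = card K" using SK inj by (simp add: card_image)
  moreover
  define pp::"nat\<Rightarrow>real" where "pp \<equiv> \<lambda>i. if i = 0 then 1 else 0"
  define nn::"nat\<Rightarrow>real" where "nn \<equiv> \<lambda>i. if i = 0 then -1 else 0"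
  have topn0: "topspace(nsphere 0) = {pp,nn}"
    by (auto simp: nsphere pp_def nn_def fun_eq_iff power2_eq_1_iff split: if_split_asm)
  have "pp \<noteq> nn" by (auto simp: pp_def nn_def fun_eq_iff)
  then have "card (topspace (nsphere 0)) = 2" using topn0 by simp
  ultimately show ?thesis by simp
qed



lemma colex_card: "colex n K \<Longrightarrow> f \<in> K \<Longrightarrow> card f = Suc n"
  by (cases n) auto

lemma colex_finite: "colex n K \<Longrightarrow> finite K"
  by (cases n) auto

lemma Q_step:
  fixes K :: "'a set set"
  assumes cx: "colex (Suc n) K" and cs: "card \<sigma> = Suc n"
    and IH: "\<And>(K'::'a set set) \<sigma>'. colex n K' \<Longrightarrow> realization K' homeomorphic_space nsphere n \<Longrightarrow>
               card \<sigma>' = n \<Longrightarrow> even (card {\<tau>\<in>K'. \<sigma>' \<subseteq> \<tau>})"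
  shows "even (card {f\<in>K. \<sigma> \<subseteq> f})"
proof -
  obtain Bs :: "('a \<times> 'a set set) set" where
    fB: "finite Bs" and
    bp: "\<forall>(v, K')\<in>Bs. colex n K' \<and> realization K' homeomorphic_space nsphere n \<and> v \<notin> vertices K'" and
    KU: "K = (\<Union>(v, K')\<in>Bs. insert v ` K')" and
    dj: "\<forall>b1\<in>Bs. \<forall>b2\<in>Bs. b1 \<noteq> b2 \<longrightarrow> insert (fst b1) ` snd b1 \<inter> insert (fst b2) ` snd b2 = {}" and
    two: "\<forall>\<sigma>\<in>(\<Union>b\<in>Bs. snd b). card {b\<in>Bs. \<sigma> \<in> snd b} = 2"
    using cx by auto
  have bp': "colex n (snd b) \<and> realization (snd b) homeomorphic_space nsphere n \<and> fst b \<notin> vertices (snd b)"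
    if "b \<in> Bs" for b using bp that by (cases b) auto
  define F where "F b = {f \<in> insert (fst b) ` snd b. \<sigma> \<subseteq> f}" for b
  define G where "G b = {\<tau>\<in>snd b. \<sigma> \<subseteq> insert (fst b) \<tau>}" for b
  have KU': "K = (\<Union>b\<in>Bs. insert (fst b) ` snd b)" using KU by (auto simp: case_prod_beta)
  have eqU: "{f\<in>K. \<sigma> \<subseteq> f} = (\<Union>b\<in>Bs. F b)" unfolding KU' F_def by auto
  have finF: "finite (F b)" if "b \<in> Bs" for b
  proof -
    have "finite (snd b)" using colex_finite bp'[OF that] by blast
    then show ?thesis unfolding F_def by simp
  qed
  have "card {f\<in>K. \<sigma> \<subseteq> f} = (\<Sum>b\<in>Bs. card (F b))"
    unfolding eqU
  proof (rule card_UN_disjoint[OF fB])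
    show "\<forall>i\<in>Bs. finite (F i)" using finF by blast
    show "\<forall>i\<in>Bs. \<forall>j\<in>Bs. i \<noteq> j \<longrightarrow> F i \<inter> F j = {}" 
    proof (intro ballI impI)
      fix i j assume "i \<in> Bs" "j \<in> Bs" "i \<noteq> j"
      then have "insert (fst i) ` snd i \<inter> insert (fst j) ` snd j = {}" using dj by blast
      then show "F i \<inter> F j = {}" unfolding F_def by blast
    qed
  qed
  also have "\<dots> = (\<Sum>b\<in>Bs. card (G b))"
  proof (rule sum.cong[OF refl])
    fix b assume b: "b \<in> Bs"
    have "F b = insert (fst b) ` G b" by (auto simp: F_def G_def)
    moreover have "inj_on (insert (fst b)) (G b)"
    proof (rule inj_onI)
      fix x y assume "x \<in> G b" "y \<in> G b" "insert (fst b) x = insert (fst b) y"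
      moreover have "fst b \<notin> x" "fst b \<notin> y" using bp'[OF b] \<open>x \<in> G b\<close> \<open>y \<in> G b\<close>
        by (auto simp: G_def vertices_def)
      ultimately show "x = y" by (metis insert_ident)
    qed
    ultimately show "card (F b) = card (G b)" by (simp add: card_image)
  qed
  also have "\<dots> = (\<Sum>b\<in>Bs. if fst b \<in> \<sigma> then card (G b) else 0) +
                  (\<Sum>b\<in>Bs. if fst b \<in> \<sigma> then 0 else card (G b))"
    by (subst sum.distrib[symmetric]) (rule sum.cong, auto)
  finally have eq: "card {f\<in>K. \<sigma> \<subseteq> f} = \<dots>" .
  have e1: "even (\<Sum>b\<in>Bs. if fst b \<in> \<sigma> then card (G b) else 0)"
  proof (rule dvd_sum)
    fix b assume b: "b \<in> Bs"
    show "even (if fst b \<in> \<sigma> then card (G b) else 0)"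
    proof (cases "fst b \<in> \<sigma>")
      case True
      have "G b = {\<tau>\<in>snd b. \<sigma> - {fst b} \<subseteq> \<tau>}" by (auto simp: G_def)
      moreover have "card (\<sigma> - {fst b}) = n" using cs True by simp
      ultimately have "even (card (G b))" using IH[of "snd b" "\<sigma> - {fst b}"] bp'[OF b] by simp
      then show ?thesis using True by simp
    qed simp
  qed
  have e2: "(\<Sum>b\<in>Bs. if fst b \<in> \<sigma> then 0 else card (G b)) = card {b\<in>Bs. \<sigma> \<in> snd b}"
  proof -
    have "(\<Sum>b\<in>Bs. if fst b \<in> \<sigma> then 0 else card (G b)) = (\<Sum>b\<in>Bs. if \<sigma> \<in> snd b then 1 else 0)"
    proof (rule sum.cong[OF refl])
      fix b assume b: "b \<in> Bs"
      have cK: "\<And>\<tau>. \<tau> \<in> snd b \<Longrightarrow> card \<tau> = Suc n" using colex_card bp'[OF b] by blast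
      show "(if fst b \<in> \<sigma> then 0 else card (G b)) = (if \<sigma> \<in> snd b then 1 else 0)"
      proof (cases "fst b \<in> \<sigma>")
        case True
        then have "\<sigma> \<notin> snd b" using bp'[OF b] by (auto simp: vertices_def)
        then show ?thesis using True by simp
      next
        case False
        have "G b = {\<tau>\<in>snd b. \<sigma> \<subseteq> \<tau>}" using False by (auto simp: G_def)
        also have "\<dots> = snd b \<inter> {\<sigma>}"
        proof (intro set_eqI iffI)
          fix \<tau> assume "\<tau> \<in> {\<tau>\<in>snd b. \<sigma> \<subseteq> \<tau>}"
          then have t1: "\<tau> \<in> snd b" and t2: "\<sigma> \<subseteq> \<tau>" by auto
          have t3: "finite \<tau>" using cK[OF t1] by (intro card_ge_0_finite) simp
          have t4: "card \<sigma> = card \<tau>" using cK[OF t1] cs by simp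
          have "\<sigma> = \<tau>" by (rule card_subset_eq[OF t3 t2 t4])
          then show "\<tau> \<in> snd b \<inter> {\<sigma>}" using t1 by simp
        qed auto
        finally show ?thesis using False by auto
      qed
    qed
    also have "\<dots> = card {b\<in>Bs. \<sigma> \<in> snd b}"
      by (simp add: sum.inter_filter[symmetric, OF fB])
    finally show ?thesis .
  qed
  have e3: "even (card {b\<in>Bs. \<sigma> \<in> snd b})"
  proof (cases "\<sigma> \<in> (\<Union>b\<in>Bs. snd b)")
    case True
    then obtain b where "b \<in> Bs" "\<sigma> \<in> snd b" by blast
    then have "card {b\<in>Bs. \<sigma> \<in> snd b} = 2" using two by blast
    then show ?thesis by simp
  next
    case False then have e: "{b\<in>Bs. \<sigma> \<in> snd b} = {}" by auto
    show ?thesis unfolding e by simp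
  qed
  have "card {f\<in>K. \<sigma> \<subseteq> f} = (\<Sum>b\<in>Bs. if fst b \<in> \<sigma> then card (G b) else 0) + card {b\<in>Bs. \<sigma> \<in> snd b}"
    using eq e2 by simp
  then show ?thesis using e1 e3 by simp
qed


lemma Q:
  fixes K :: "'a set set"
  shows "colex (Suc n) K \<Longrightarrow> card \<sigma> = Suc n \<Longrightarrow> even (card {f\<in>K. \<sigma> \<subseteq> f})"
proof (induction n arbitrary: K \<sigma>)
  case 0
  show ?case
  proof (rule Q_step[OF 0(1) 0(2)])
    fix K' :: "'a set set" and \<sigma>' :: "'a set"
    assume c0: "colex 0 K'" and h: "realization K' homeomorphic_space nsphere 0" and cs: "card \<sigma>' = 0"
    show "even (card {\<tau>\<in>K'. \<sigma>' \<subseteq> \<tau>})"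
    proof (cases "finite \<sigma>'")
      case True
      then have "\<sigma>' = {}" using cs by simp
      then have "{\<tau>\<in>K'. \<sigma>' \<subseteq> \<tau>} = K'" by simp
      then show ?thesis using card_colex0_sphere[OF c0 h] by simp
    next
      case False
      have "{\<tau>\<in>K'. \<sigma>' \<subseteq> \<tau>} = {}"
      proof (rule ccontr)
        assume "{\<tau>\<in>K'. \<sigma>' \<subseteq> \<tau>} \<noteq> {}"
        then obtain \<tau> where t: "\<tau> \<in> K'" "\<sigma>' \<subseteq> \<tau>" by blast
        have "card \<tau> = 1" using c0 t by simp
        then have "finite \<tau>" by (intro card_ge_0_finite) simp
        then show False using t False finite_subset by blast
      qed
      then have "card {\<tau>\<in>K'. \<sigma>' \<subseteq> \<tau>} = 0" by (simp only: card.empty)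
      then show ?thesis by simp
    qed
  qed
next
  case (Suc m)
  show ?case
    by (rule Q_step[OF Suc(2) Suc(3)]) (rule Suc(1))
qed

lemma facet_facts:
  fixes K :: "'a set set"
  assumes cx: "colex (Suc n) K" and pc: "proper_coloring (Suc n) K col" and f: "f \<in> K"
  shows "card f = Suc n + 1" "finite f" "inj_on col f" "col ` f = {0..Suc n}"
proof -
  show cf: "card f = Suc n + 1" using colex_card[OF cx f] by simp
  then show ff: "finite f" by (intro card_ge_0_finite) simp
  show inj: "inj_on col f"
  proof (rule inj_onI)
    fix x y assume "x \<in> f" "y \<in> f" "col x = col y"
    then show "x = y" using pc f unfolding proper_coloring_def by blast
  qed
  have sub: "col ` f \<subseteq> {0..Suc n}" using pc f unfolding proper_coloring_def vertices_def by auto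
  have "card (col ` f) = card {0..Suc n}" using card_image[OF inj] cf by simp
  then show "col ` f = {0..Suc n}" using card_subset_eq[OF _ sub] by simp
qed

lemma E:
  fixes K :: "'a set set"
  assumes cx: "colex (Suc n) K" and pc: "proper_coloring (Suc n) K col"
    and c: "c \<le> Suc n" and nc: "c \<notin> col ` \<tau>"
  shows "even (card {f\<in>K. \<tau> \<subseteq> f})"
proof -
  note ff = facet_facts[OF cx pc]
  define g where "g f = {x\<in>f. col x \<noteq> c}" for f
  have cg: "card (g f) = Suc n" if "f \<in> K" for f
  proof -
    have "c \<in> col ` f" using ff(4)[OF that] c by simp
    then obtain x0 where x0: "x0 \<in> f" "col x0 = c" by blast
    have "g f = f - {x0}"
      using x0 ff(3)[OF that] by (auto simp: g_def inj_on_def)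
    then show ?thesis using ff(1,2)[OF that] x0 by simp
  qed
  have fK: "finite K" using colex_finite[OF cx] .
  define A where "A = {f\<in>K. \<tau> \<subseteq> f}"
  have fA: "finite A" using fK by (simp add: A_def)
  have AU: "A = (\<Union>\<sigma>\<in>g ` A. {f\<in>A. g f = \<sigma>})" by auto
  have "card A = (\<Sum>\<sigma>\<in>g ` A. card {f\<in>A. g f = \<sigma>})"
  proof -
    have "card (\<Union>\<sigma>\<in>g ` A. {f\<in>A. g f = \<sigma>}) = (\<Sum>\<sigma>\<in>g ` A. card {f\<in>A. g f = \<sigma>})"
      by (rule card_UN_disjoint) (use fA in auto)
    then show ?thesis using AU by simp
  qed
  moreover have "even (\<Sum>\<sigma>\<in>g ` A. card {f\<in>A. g f = \<sigma>})"
  proof (rule dvd_sum)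
    fix \<sigma> assume "\<sigma> \<in> g ` A"
    then obtain f1 where f1: "f1 \<in> A" "\<sigma> = g f1" by blast
    have f1K: "f1 \<in> K" using f1 by (simp add: A_def)
    have "{f\<in>A. g f = \<sigma>} = {f\<in>K. \<sigma> \<subseteq> f}"
    proof (intro set_eqI iffI)
      fix f assume "f \<in> {f\<in>A. g f = \<sigma>}"
      then show "f \<in> {f\<in>K. \<sigma> \<subseteq> f}" by (auto simp: A_def g_def)
    next
      fix f assume "f \<in> {f\<in>K. \<sigma> \<subseteq> f}"
      then have fK': "f \<in> K" and sf: "\<sigma> \<subseteq> f" by auto
      have "\<tau> \<subseteq> \<sigma>" using f1 nc by (auto simp: A_def g_def)
      then have "f \<in> A" using fK' sf by (auto simp: A_def)
      moreover have s1: "\<sigma> \<subseteq> g f" using sf f1 by (auto simp: g_def)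
      moreover have s2: "finite (g f)" using ff(2)[OF fK'] by (simp add: g_def)
      moreover have s3: "card \<sigma> = card (g f)" using cg[OF fK'] cg[OF f1K] f1 by simp
      have "\<sigma> = g f" by (rule card_subset_eq[OF s2 s1 s3])
      ultimately show "f \<in> {f\<in>A. g f = \<sigma>}" by simp
    qed
    moreover have "card \<sigma> = Suc n" using cg[OF f1K] f1 by simp
    ultimately show "even (card {f\<in>A. g f = \<sigma>})" using Q[OF cx] by simp
  qed
  ultimately show ?thesis by (simp add: A_def)
qed


lemma lin_cong: "(\<And>x. x \<in> c \<Longrightarrow> g x = h x) \<Longrightarrow> lin g c = lin h c"
  unfolding lin_def by (metis (no_types, lifting) Collect_cong)

lemma lin_single: "lin g {a} = g a"
proof -
  have "{x\<in>{a}. y \<in> g x} = (if y \<in> g a then {a} else {})" for y by auto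
  then show ?thesis unfolding lin_def by auto
qed

lemma lin_empty: "lin g {} = {}"
  unfolding lin_def by simp

lemma lin_filter: "lin (\<lambda>x. if P x then {x} else {}) A = {x\<in>A. P x}"
proof -
  have "{x\<in>A. y \<in> (if P x then {x} else {})} = (if y \<in> A \<and> P y then {y} else {})" for y by auto
  then show ?thesis unfolding lin_def by auto
qed

theorem lemma5:
  fixes K :: "'v set set" and col :: "'v \<Rightarrow> nat" and d k :: nat and C :: "nat set"
  assumes colex: "colex d K"
    and coloring: "proper_coloring d K col"
    and standing: "\<forall>v\<in>vertices K. colorable_ball_at d v {f\<in>K. v \<in> f}"
    and k1: "1 \<le> k" and kd: "k < d"
    and C: "C \<subseteq> {0..d}" "card C = k + 1"
  shows "(\<forall>c \<subseteq> simplices K d.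
           lin (pi0 col C) (lin (gbd K d (k - 1)) c) = lin (bdC k) (lin (pi1 col k C) c)) \<and>
         (\<forall>c \<subseteq> simplices K (d - k - 1).
           lin (pi1 col k C) (lin (gbd K (d - k - 1) d) c) = lin (bdC_top K k) (lin (pi2 col d C) c))"
proof -
  obtain n where dn: "d = Suc n" using kd by (cases d) auto
  have cx: "colex (Suc n) K" using colex dn by simp
  have pc: "proper_coloring (Suc n) K col" using coloring dn by simp
  note ff = facet_facts[OF cx pc, folded dn]
  have fK: "finite K" using colex_finite[OF cx] .
  have finS: "finite (simplices K m)" for m
  proof -
    have "simplices K m \<subseteq> Pow (\<Union>K)" by (auto simp: simplices_def)
    moreover have "finite (\<Union>K)" using fK ff(2) by blast
    ultimately show ?thesis by (meson finite_Pow_iff finite_subset)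
  qed
  have SK: "simplices K d = K"
  proof (intro set_eqI iffI)
    fix s assume "s \<in> simplices K d"
    then obtain f where f: "f \<in> K" "s \<subseteq> f" and cs: "card s = d + 1" by (auto simp: simplices_def)
    have "s = f" by (rule card_subset_eq[OF ff(2)[OF f(1)] f(2)]) (use cs ff(1)[OF f(1)] in simp)
    then show "s \<in> K" using f by simp
  next
    fix s assume "s \<in> K" then show "s \<in> simplices K d" using ff(1) by (auto simp: simplices_def)
  qed
  have R: "restr col k C f = {x\<in>f. col x \<in> C}" if f: "f \<in> K" for f
    unfolding restr_def
  proof (rule the_equality)
    have im: "col ` {x\<in>f. col x \<in> C} = C" using ff(4)[OF f] C(1) by auto
    have "inj_on col {x\<in>f. col x \<in> C}" using ff(3)[OF f] by (rule inj_on_subset) auto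
    then have "card {x\<in>f. col x \<in> C} = k + 1" using card_image im C(2) by fastforce
    then show "{x\<in>f. col x \<in> C} \<in> faces k f \<and> col ` {x\<in>f. col x \<in> C} = C"
      using im by (auto simp: faces_def)
  next
    fix \<mu> assume "\<mu> \<in> faces k f \<and> col ` \<mu> = C"
    then have m: "\<mu> \<subseteq> f" "col ` \<mu> = C" by (auto simp: faces_def)
    show "\<mu> = {x\<in>f. col x \<in> C}"
    proof (intro set_eqI iffI)
      fix x assume "x \<in> \<mu>" then show "x \<in> {x\<in>f. col x \<in> C}" using m by auto
    next
      fix x assume "x \<in> {x\<in>f. col x \<in> C}"
      then have x: "x \<in> f" "col x \<in> C" by auto
      then obtain y where "y \<in> \<mu>" "col y = col x" using m(2) by (metis imageE)
      then have "y = x" using ff(3)[OF f] m(1) x(1) by (meson inj_onD subsetD)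
      then show "x \<in> \<mu>" using \<open>y \<in> \<mu>\<close> by simp
    qed
  qed
  have part1: "lin (pi0 col C) (lin (gbd K d (k - 1)) c) = lin (bdC k) (lin (pi1 col k C) c)"
    if c: "c \<subseteq> simplices K d" for c
  proof -
    have cK: "c \<subseteq> K" using c SK by simp
    have fc: "finite c" using cK fK finite_subset by blast
    have "lin (pi0 col C) (lin (gbd K d (k - 1)) c) = lin (\<lambda>x. lin (pi0 col C) (gbd K d (k - 1) x)) c"
    proof (rule lin_comp[OF fc])
      fix x assume "x \<in> c"
      have "gbd K d (k - 1) x \<subseteq> Pow x" using kd by (auto simp: gbd_def faces_def)
      then show "finite (gbd K d (k - 1) x)" using ff(2) \<open>x \<in> c\<close> cK
        by (meson finite_Pow_iff finite_subset subsetD)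
    qed
    also have "\<dots> = lin (\<lambda>x. lin (bdC k) (pi1 col k C x)) c"
    proof (rule lin_cong)
      fix \<delta> assume "\<delta> \<in> c"
      then have dK: "\<delta> \<in> K" using cK by blast
      have "lin (pi0 col C) (gbd K d (k - 1) \<delta>) = {\<mu>\<in>faces (k - 1) \<delta>. col ` \<mu> \<subseteq> C}"
      proof -
        have p0: "pi0 col C = (\<lambda>\<mu>. if col ` \<mu> \<subseteq> C then {\<mu>} else {})"
          by (simp add: fun_eq_iff pi0_def)
        have "gbd K d (k - 1) \<delta> = faces (k - 1) \<delta>" using kd by (auto simp: gbd_def)
        then show ?thesis unfolding p0 by (simp only: lin_filter)
      qed
      also have "\<dots> = faces (k - 1) {x\<in>\<delta>. col x \<in> C}" by (auto simp: faces_def)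
      also have "\<dots> = lin (bdC k) (pi1 col k C \<delta>)"
        by (simp add: pi1_def lin_single bdC_def R[OF dK])
      finally show "lin (pi0 col C) (gbd K d (k - 1) \<delta>) = lin (bdC k) (pi1 col k C \<delta>)" .
    qed
    also have "\<dots> = lin (bdC k) (lin (pi1 col k C) c)"
      by (rule lin_comp[OF fc, symmetric]) (simp add: pi1_def)
    finally show ?thesis .
  qed
  have part2: "lin (pi1 col k C) (lin (gbd K (d - k - 1) d) c) = lin (bdC_top K k) (lin (pi2 col d C) c)"
    if c: "c \<subseteq> simplices K (d - k - 1)" for c
  proof -
    have fc: "finite c" using c finS finite_subset by blast
    have gb: "gbd K (d - k - 1) d x = Star K d x" for x
    proof -
      have "\<not> d < d - k - 1" "d - k - 1 < d" using kd by arith+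
      then show ?thesis unfolding gbd_def by (simp only: if_False if_True)
    qed
    have "lin (pi1 col k C) (lin (gbd K (d - k - 1) d) c) = lin (\<lambda>x. lin (pi1 col k C) (gbd K (d - k - 1) d x)) c"
    proof (rule lin_comp[OF fc])
      fix x show "finite (gbd K (d - k - 1) d x)"
        unfolding gb Star_def using finS[of d] by simp
    qed
    also have "\<dots> = lin (\<lambda>x. lin (bdC_top K k) (pi2 col d C x)) c"
    proof (rule lin_cong)
      fix \<nu> assume "\<nu> \<in> c"
      then have nS: "\<nu> \<in> simplices K (d - k - 1)" using c by blast
      then have cn0: "card \<nu> = d - k - 1 + 1" and nf: "\<exists>f\<in>K. \<nu> \<subseteq> f" unfolding simplices_def by auto
      have cn: "card \<nu> = d - k" using cn0 kd by arith
      define S where "S = {f\<in>K. \<nu> \<subseteq> f}"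
      have gS: "gbd K (d - k - 1) d \<nu> = S" unfolding gb Star_def S_def SK by simp
      have lS: "lin (pi1 col k C) S = {\<mu>. odd (card {f\<in>S. \<mu> = restr col k C f})}"
        unfolding lin_def pi1_def by simp
      show "lin (pi1 col k C) (gbd K (d - k - 1) d \<nu>) = lin (bdC_top K k) (pi2 col d C \<nu>)"
      proof (cases "col ` \<nu> = {0..d} - C")
        case True
        have rD: "restr col k C f = f - \<nu>" if "f \<in> S" for f
        proof -
          have f: "f \<in> K" "\<nu> \<subseteq> f" using that by (auto simp: S_def)
          show ?thesis unfolding R[OF f(1)]
          proof (intro set_eqI iffI)
            fix x assume x: "x \<in> {x\<in>f. col x \<in> C}"
            show "x \<in> f - \<nu>"
            proof
              show "x \<in> f" using x by simp
              show "x \<notin> \<nu>"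
              proof
                assume "x \<in> \<nu>" then have "col x \<in> col ` \<nu>" by simp
                then have "col x \<in> {0..d} - C" unfolding True .
                then show False using x by simp
              qed
            qed
          next
            fix x assume x: "x \<in> f - \<nu>"
            have "col x \<in> C"
            proof (rule ccontr)
              assume nC: "col x \<notin> C"
              have xf: "x \<in> f" using x by simp
              have "col x \<in> col ` f" using xf by (rule imageI)
              then have "col x \<in> {0..d}" unfolding ff(4)[OF f(1)] .
              then have "col x \<in> {0..d} - C" using nC by (rule DiffI)
              then have "col x \<in> col ` \<nu>" unfolding True .
              then obtain y where y: "y \<in> \<nu>" "col y = col x" by (rule imageE) (rule that, simp_all)
              have yf: "y \<in> f" using f(2) y(1) by (rule subsetD)
              have "y = x" by (rule inj_onD[OF ff(3)[OF f(1)] y(2) yf xf])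
              then show False using x y(1) by simp
            qed
            then show "x \<in> {x\<in>f. col x \<in> C}" using x by simp
          qed
        qed
        have cD: "card (f - \<nu>) = k + 1" if "f \<in> S" for f
        proof -
          have f: "f \<in> K" "\<nu> \<subseteq> f" using that by (auto simp: S_def)
          have "card (f - \<nu>) = card f - card \<nu>" using f ff(2)[OF f(1)] by (meson card_Diff_subset finite_subset)
          then show ?thesis using ff(1)[OF f(1)] cn kd by simp
        qed
        have key: "{f\<in>S. \<mu> = restr col k C f} = (if \<mu> \<in> Link K k \<nu> then {\<nu> \<union> \<mu>} else {})" for \<mu>
        proof (cases "\<mu> \<in> Link K k \<nu>")
          case True
          then have L1: "\<mu> \<in> simplices K k" and dj: "\<mu> \<inter> \<nu> = {}" and L3: "\<exists>f\<in>K. \<mu> \<subseteq> f \<and> \<nu> \<subseteq> f"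
            unfolding Link_def by auto
          from L3 obtain f0 where f0: "f0 \<in> K" "\<mu> \<subseteq> f0" "\<nu> \<subseteq> f0" by blast
          have cm: "card \<mu> = k + 1" using L1 unfolding simplices_def by simp
          have fin0: "finite f0" using ff(2)[OF f0(1)] .
          have fnu: "finite \<nu>" using finite_subset[OF f0(3) fin0] .
          have fmu: "finite \<mu>" using finite_subset[OF f0(2) fin0] .
          have dj': "\<nu> \<inter> \<mu> = {}" using dj by blast
          have "card (\<nu> \<union> \<mu>) = card \<nu> + card \<mu>"
            by (rule card_Un_disjoint[OF fnu fmu dj'])
          then have ceq: "card (\<nu> \<union> \<mu>) = card f0" using cn cm ff(1)[OF f0(1)] kd by simp
          have sub0: "\<nu> \<union> \<mu> \<subseteq> f0" using f0 by blast
          have eq0: "\<nu> \<union> \<mu> = f0" by (rule card_subset_eq[OF fin0 sub0 ceq])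
          have "{f\<in>S. \<mu> = restr col k C f} = {\<nu> \<union> \<mu>}"
          proof (intro set_eqI iffI)
            fix f assume "f \<in> {f\<in>S. \<mu> = restr col k C f}"
            then have "f \<in> S" "\<mu> = f - \<nu>" using rD by auto
            then show "f \<in> {\<nu> \<union> \<mu>}" by (auto simp: S_def)
          next
            fix f assume "f \<in> {\<nu> \<union> \<mu>}"
            then have ff0: "f = f0" using eq0 by simp
            have "f0 \<in> S" using f0 by (simp add: S_def)
            moreover have "restr col k C f0 = \<mu>" using rD[OF \<open>f0 \<in> S\<close>] eq0 dj by auto
            ultimately show "f \<in> {f\<in>S. \<mu> = restr col k C f}" using ff0 by simp
          qed
          then show ?thesis using True by (simp only: if_True)
        next
          case False
          have "{f\<in>S. \<mu> = restr col k C f} = {}"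
          proof (rule ccontr)
            assume "{f\<in>S. \<mu> = restr col k C f} \<noteq> {}"
            then obtain f where f0: "f \<in> S" "\<mu> = restr col k C f" by blast
            have f: "f \<in> S" "\<mu> = f - \<nu>" using f0 rD[OF f0(1)] by simp_all
            have fK': "f \<in> K" "\<nu> \<subseteq> f" using f(1) by (auto simp: S_def)
            have "card \<mu> = k + 1" using cD[OF f(1)] f(2) by simp
            moreover have "\<mu> \<subseteq> f" using f(2) by blast
            ultimately have "\<mu> \<in> simplices K k" using fK' unfolding simplices_def by blast
            moreover have "\<mu> \<inter> \<nu> = {}" using f(2) by blast
            ultimately have "\<mu> \<in> Link K k \<nu>" using f(2) fK' unfolding Link_def by blast
            then show False using False by simp
          qed
          then show ?thesis using False by (simp only: if_False)
        qed
        have "lin (pi1 col k C) S = Link K k \<nu>"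
        proof -
          have "odd (card {f\<in>S. \<mu> = restr col k C f}) \<longleftrightarrow> \<mu> \<in> Link K k \<nu>" for \<mu>
            unfolding key by simp
          then show ?thesis unfolding lS by blast
        qed
        moreover have "lin (bdC_top K k) (pi2 col d C \<nu>) = Link K k \<nu>"
          using True by (simp add: pi2_def lin_single bdC_top_def)
        ultimately show ?thesis using gS by simp
      next
        case False
        have "lin (pi1 col k C) S = {}"
        proof -
          have "even (card {f\<in>S. \<mu> = restr col k C f})" for \<mu>
          proof (cases "{f\<in>S. \<mu> = restr col k C f} = {}")
            case True show ?thesis unfolding True by simp
          next
            case False2: False
            then obtain f0 where f0: "f0 \<in> S" "\<mu> = restr col k C f0" by blast
            have f0K: "f0 \<in> K" "\<nu> \<subseteq> f0" using f0(1) by (auto simp: S_def)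
            have mu: "\<mu> = {x\<in>f0. col x \<in> C}" using f0 R[OF f0K(1)] by simp
            have cm: "col ` \<mu> = C" using mu ff(4)[OF f0K(1)] C(1) by auto
            have eqS: "{f\<in>S. \<mu> = restr col k C f} = {f\<in>K. \<nu> \<union> \<mu> \<subseteq> f}"
            proof (intro set_eqI iffI)
              fix f assume "f \<in> {f\<in>S. \<mu> = restr col k C f}"
              then have "f \<in> K" "\<nu> \<subseteq> f" "\<mu> = {x\<in>f. col x \<in> C}" using R by (auto simp: S_def)
              then show "f \<in> {f\<in>K. \<nu> \<union> \<mu> \<subseteq> f}" by auto
            next
              fix f assume "f \<in> {f\<in>K. \<nu> \<union> \<mu> \<subseteq> f}"
              then have f: "f \<in> K" "\<nu> \<subseteq> f" "\<mu> \<subseteq> f" by auto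
              have "{x\<in>f. col x \<in> C} = \<mu>"
              proof (intro set_eqI iffI)
                fix x assume x: "x \<in> {x\<in>f. col x \<in> C}"
                have xf: "x \<in> f" using x by simp
                have "col x \<in> C" using x by simp
                then have "col x \<in> col ` \<mu>" unfolding cm .
                then obtain y where y: "y \<in> \<mu>" "col y = col x" by (rule imageE) (rule that, simp_all)
                have yf: "y \<in> f" using f(3) y(1) by (rule subsetD)
                have "y = x" by (rule inj_onD[OF ff(3)[OF f(1)] y(2) yf xf])
                then show "x \<in> \<mu>" using y(1) by simp
              next
                fix x assume "x \<in> \<mu>" then show "x \<in> {x\<in>f. col x \<in> C}" using f(3) mu by auto
              qed
              then show "f \<in> {f\<in>S. \<mu> = restr col k C f}" using R[OF f(1)] f by (simp add: S_def)
            qed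
            obtain c0 where c0: "c0 \<le> d" "c0 \<notin> col ` (\<nu> \<union> \<mu>)"
            proof -
              have "\<exists>c0. c0 \<le> d \<and> c0 \<notin> col ` (\<nu> \<union> \<mu>)"
              proof (rule ccontr)
                assume "\<not> ?thesis"
                then have nn: "\<forall>c0. c0 \<le> d \<longrightarrow> c0 \<in> col ` (\<nu> \<union> \<mu>)" by blast
                have sub: "{0..d} - C \<subseteq> col ` \<nu>"
                proof
                  fix z assume z: "z \<in> {0..d} - C"
                  then have "z \<in> col ` (\<nu> \<union> \<mu>)" using nn by simp
                  then have "z \<in> col ` \<nu> \<union> C" unfolding image_Un cm .
                  then show "z \<in> col ` \<nu>" using z by simp
                qed
                have "card (col ` \<nu>) = card \<nu>"
                  by (rule card_image[OF inj_on_subset[OF ff(3)[OF f0K(1)] f0K(2)]])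
                then have c1: "card ({0..d} - C) = card (col ` \<nu>)"
                  using cn C by (simp add: card_Diff_subset finite_subset)
                have fin: "finite (col ` \<nu>)" using finite_subset[OF f0K(2) ff(2)[OF f0K(1)]] by simp
                have "{0..d} - C = col ` \<nu>" by (rule card_subset_eq[OF fin sub c1])
                then show False using False by simp
              qed
              then show ?thesis using that by blast
            qed
            have c0': "c0 \<le> Suc n" using c0(1) dn by simp
            show ?thesis unfolding eqS by (rule E[OF cx pc c0' c0(2)])
          qed
          then show ?thesis unfolding lS by simp
        qed
        moreover have "lin (bdC_top K k) (pi2 col d C \<nu>) = {}"
          using False by (simp add: pi2_def lin_empty)
        ultimately show ?thesis using gS by simp
      qed
    qed
    also have "\<dots> = lin (bdC_top K k) (lin (pi2 col d C) c)"
      by (rule lin_comp[OF fc, symmetric]) (simp add: pi2_def)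
    finally show ?thesis .
  qed
  show ?thesis using part1 part2 by blast
qed

end
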